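(* Let $(u_k)_{k\ge0}$ be generated by the IHT method with parameter $L>0$, and let $\sigma:=\min\big(b,\sqrt{2\beta/(L+\alpha)}\big)$. Then for every $k\ge1$ and every $p\in[1,\infty)$, $$\|u_{k+1}-u_k\|_{L^p(\Omega)}^p\ge\sigma^p\,\|\chi_k-\chi_{k+1}\|_{L^1(\Omega)}.$$
   Context: Let $\Omega\subset\mathbb R^n$ be a bounded open set with Lebesgue measure. Fix $\alpha\ge0$, $\beta>0$, $b\in(0,+\infty]$ and set $U_{ad}:=\{v\in L^2(\Omega): |v(x)|\le b\text{ a.e. in }\Omega\}$. For $t\in\mathbb R$ let $|t|_0:=0$ if $t=0$ and $|t|_0:=1$ if $t\ne0$; for measurable $u$ let $\|u\|_0:=\operatorname{meas}\{x\in\Omega:u(x)\ne0\}$. Define $g(u):=\frac\alpha2\|u\|_{L^2(\Omega)}^2+\beta\|u\|_0$. The function $f:L^2(\Omega)\to\mathbb R$ is weakly lower semicontinuous, bounded from below and Fréchet differentiable; $\nabla f(u)\in L^2(\Omega)$ is the Riesz representative of its derivative, and $\nabla f$ is Lipschitz continuous on $L^2(\Omega)$ with constant $L_f$. IHT method: given $L>0$ and $u_0\in U_{ad}$, for $k=0,1,\dots$ let $u_{k+1}$ be a global solution of $\min_{u\in U_{ad}} f(u_k)+\int_\Omega\nabla f(u_k)(u-u_k)\,dx+\frac L2\|u-u_k\|_{L^2(\Omega)}^2+g(u)$ (a solution exists). Let $\chi_k$ denote the characteristic function of $\{x\in\Omega:u_k(x)\ne0\}$. *)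

theory Defs
  imports "HOL-Analysis.Analysis"
begin

text \<open>Elements of L2(Omega) are represented by real functions on the ambient
Euclidean space that are Lebesgue measurable and square integrable on Omega
(w.r.t. Lebesgue measure restricted to Omega).\<close>

definition L2 :: "'a::euclidean_space set \<Rightarrow> ('a \<Rightarrow> real) \<Rightarrow> bool" where
  "L2 \<Omega> u \<longleftrightarrow> u \<in> borel_measurable (lebesgue_on \<Omega>) \<and>
     integrable (lebesgue_on \<Omega>) (\<lambda>x. (u x)\<^sup>2)"

definition L2norm :: "'a::euclidean_space set \<Rightarrow> ('a \<Rightarrow> real) \<Rightarrow> real" where
  "L2norm \<Omega> u = sqrt (integral\<^sup>L (lebesgue_on \<Omega>) (\<lambda>x. (u x)\<^sup>2))"

definition L2inner :: "'a::euclidean_space set \<Rightarrow> ('a \<Rightarrow> real) \<Rightarrow> ('a \<Rightarrow> real) \<Rightarrow> real" where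
  "L2inner \<Omega> u v = integral\<^sup>L (lebesgue_on \<Omega>) (\<lambda>x. u x * v x)"

definition L0 :: "'a::euclidean_space set \<Rightarrow> ('a \<Rightarrow> real) \<Rightarrow> real" where
  "L0 \<Omega> u = measure (lebesgue_on \<Omega>) {x\<in>\<Omega>. u x \<noteq> 0}"

text \<open>Admissible set; b in (0, +infinity] is an extended real.\<close>
definition Uad :: "'a::euclidean_space set \<Rightarrow> ereal \<Rightarrow> ('a \<Rightarrow> real) set" where
  "Uad \<Omega> b = {v. L2 \<Omega> v \<and> (AE x in lebesgue_on \<Omega>. ereal \<bar>v x\<bar> \<le> b)}"

definition gfun :: "'a::euclidean_space set \<Rightarrow> real \<Rightarrow> real \<Rightarrow> ('a \<Rightarrow> real) \<Rightarrow> real" where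
  "gfun \<Omega> \<alpha> \<beta> u = \<alpha> / 2 * (L2norm \<Omega> u)\<^sup>2 + \<beta> * L0 \<Omega> u"

definition IHT_model ::
  "'a::euclidean_space set \<Rightarrow> real \<Rightarrow> real \<Rightarrow> (('a \<Rightarrow> real) \<Rightarrow> real) \<Rightarrow>
   (('a \<Rightarrow> real) \<Rightarrow> ('a \<Rightarrow> real)) \<Rightarrow> real \<Rightarrow> ('a \<Rightarrow> real) \<Rightarrow> ('a \<Rightarrow> real) \<Rightarrow> real" where
  "IHT_model \<Omega> \<alpha> \<beta> f gradf L uk u =
     f uk + L2inner \<Omega> (gradf uk) (\<lambda>x. u x - uk x)
     + L / 2 * (L2norm \<Omega> (\<lambda>x. u x - uk x))\<^sup>2 + gfun \<Omega> \<alpha> \<beta> u"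

definition standing_f ::
  "'a::euclidean_space set \<Rightarrow> (('a \<Rightarrow> real) \<Rightarrow> real) \<Rightarrow>
   (('a \<Rightarrow> real) \<Rightarrow> ('a \<Rightarrow> real)) \<Rightarrow> real \<Rightarrow> bool" where
  "standing_f \<Omega> f gradf Lf \<longleftrightarrow>
     \<comment> \<open>well defined on equivalence classes\<close>
     (\<forall>u v. L2 \<Omega> u \<longrightarrow> L2 \<Omega> v \<longrightarrow> (AE x in lebesgue_on \<Omega>. u x = v x) \<longrightarrow>
        f u = f v \<and> (AE x in lebesgue_on \<Omega>. gradf u x = gradf v x)) \<and>
     \<comment> \<open>bounded from below\<close>
     (\<exists>c. \<forall>u. L2 \<Omega> u \<longrightarrow> c \<le> f u) \<and>
     \<comment> \<open>weakly lower semicontinuous\<close>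
     (\<forall>w w0. (\<forall>n. L2 \<Omega> (w n)) \<longrightarrow> L2 \<Omega> w0 \<longrightarrow>
        (\<forall>\<phi>. L2 \<Omega> \<phi> \<longrightarrow> (\<lambda>n. L2inner \<Omega> (w n) \<phi>) \<longlonglongrightarrow> L2inner \<Omega> w0 \<phi>) \<longrightarrow>
        ereal (f w0) \<le> liminf (\<lambda>n. ereal (f (w n)))) \<and>
     \<comment> \<open>Frechet differentiable with Riesz gradient in L2\<close>
     (\<forall>u. L2 \<Omega> u \<longrightarrow> L2 \<Omega> (gradf u) \<and>
        (\<forall>\<epsilon>>0. \<exists>\<delta>>0. \<forall>h. L2 \<Omega> h \<longrightarrow> L2norm \<Omega> h < \<delta> \<longrightarrow>
           \<bar>f (\<lambda>x. u x + h x) - f u - L2inner \<Omega> (gradf u) h\<bar> \<le> \<epsilon> * L2norm \<Omega> h)) \<and>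
     \<comment> \<open>Lipschitz gradient with constant Lf\<close>
     (\<forall>u v. L2 \<Omega> u \<longrightarrow> L2 \<Omega> v \<longrightarrow>
        L2norm \<Omega> (\<lambda>x. gradf u x - gradf v x) \<le> Lf * L2norm \<Omega> (\<lambda>x. u x - v x))"

definition IHT_seq ::
  "'a::euclidean_space set \<Rightarrow> ereal \<Rightarrow> real \<Rightarrow> real \<Rightarrow> (('a \<Rightarrow> real) \<Rightarrow> real) \<Rightarrow>
   (('a \<Rightarrow> real) \<Rightarrow> ('a \<Rightarrow> real)) \<Rightarrow> real \<Rightarrow> (nat \<Rightarrow> 'a \<Rightarrow> real) \<Rightarrow> bool" where
  "IHT_seq \<Omega> b \<alpha> \<beta> f gradf L u \<longleftrightarrow>
     u 0 \<in> Uad \<Omega> b \<and>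
     (\<forall>k. u (Suc k) \<in> Uad \<Omega> b \<and>
        (\<forall>v\<in>Uad \<Omega> b. IHT_model \<Omega> \<alpha> \<beta> f gradf L (u k) (u (Suc k))
                        \<le> IHT_model \<Omega> \<alpha> \<beta> f gradf L (u k) v))"

definition supp_chi :: "('a \<Rightarrow> real) \<Rightarrow> 'a \<Rightarrow> real" where
  "supp_chi u = indicator {x. u x \<noteq> 0}"

end

theory Submission imports Defs begin


lemma L2_mult_integrable:
  assumes "L2 \<Omega> u" "L2 \<Omega> v"
  shows "integrable (lebesgue_on \<Omega>) (\<lambda>x. u x * v x)"
proof -
  have i: "integrable (lebesgue_on \<Omega>) (\<lambda>x. (u x)\<^sup>2 + (v x)\<^sup>2)"
    using assms unfolding L2_def by auto
  have m: "(\<lambda>x. u x * v x) \<in> borel_measurable (lebesgue_on \<Omega>)"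
    using assms unfolding L2_def by auto
  have ae: "AE x in lebesgue_on \<Omega>. norm (u x * v x) \<le> norm ((u x)\<^sup>2 + (v x)\<^sup>2)"
  proof (intro AE_I2)
    fix x
    have "2 * \<bar>u x * v x\<bar> \<le> (u x)\<^sup>2 + (v x)\<^sup>2"
    proof -
      have "0 \<le> (\<bar>u x\<bar> - \<bar>v x\<bar>)\<^sup>2" by simp
      then have "2 * (\<bar>u x\<bar> * \<bar>v x\<bar>) \<le> \<bar>u x\<bar>\<^sup>2 + \<bar>v x\<bar>\<^sup>2"
        unfolding power2_diff by linarith
      then show ?thesis by (simp add: abs_mult)
    qed
    then show "norm (u x * v x) \<le> norm ((u x)\<^sup>2 + (v x)\<^sup>2)" by simp
  qed
  show ?thesis by (rule Bochner_Integration.integrable_bound[OF i m ae])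
qed

lemma L2_diff:
  assumes "L2 \<Omega> u" "L2 \<Omega> v"
  shows "L2 \<Omega> (\<lambda>x. u x - v x)"
proof -
  have m: "u \<in> borel_measurable (lebesgue_on \<Omega>)" "v \<in> borel_measurable (lebesgue_on \<Omega>)"
    using assms unfolding L2_def by auto
  have "integrable (lebesgue_on \<Omega>) (\<lambda>x. (u x)\<^sup>2 - 2 * (u x * v x) + (v x)\<^sup>2)"
    using assms L2_mult_integrable[OF assms] unfolding L2_def by auto
  moreover have "(\<lambda>x. (u x)\<^sup>2 - 2 * (u x * v x) + (v x)\<^sup>2) = (\<lambda>x. (u x - v x)\<^sup>2)"
    by (simp add: power2_diff algebra_simps)
  ultimately show ?thesis using m unfolding L2_def by auto
qed



lemma pointwise:
  fixes w q c \<beta> s :: real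
  assumes c: "c>0" and b: "\<beta>>0" and s: "0<s" "s\<^sup>2 \<le> \<beta>/c" and w: "0<\<bar>w\<bar>" "\<bar>w\<bar><s"
  defines "v \<equiv> if c*q\<^sup>2 < c*(w-q)\<^sup>2+\<beta> then 0 else max (-s) (min s q)"
  shows "c*(v-q)\<^sup>2 + \<beta>*(if v\<noteq>0 then 1 else 0) < c*(w-q)\<^sup>2 + \<beta>*(if w \<noteq> 0 then 1 else 0)"
    and "\<bar>v\<bar> \<le> s"
proof -
  show "\<bar>v\<bar> \<le> s" using s unfolding v_def by auto
  show "c*(v-q)\<^sup>2 + \<beta>*(if v\<noteq>0 then 1 else 0) < c*(w-q)\<^sup>2 + \<beta>*(if w \<noteq> 0 then 1 else 0)"
  proof (cases "c*q\<^sup>2 < c*(w-q)\<^sup>2+\<beta>")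
    case True
    then show ?thesis using w unfolding v_def by simp
  next
    case False
    then have v: "v = max (-s) (min s q)" unfolding v_def by simp
    have "c * s\<^sup>2 \<le> \<beta>" using s c by (simp add: field_simps)
    moreover have "w\<^sup>2 < s\<^sup>2" using w
      by (metis abs_ge_zero power2_abs power_strict_mono zero_less_numeral)
    ultimately have "c*w\<^sup>2 < \<beta>" using c by (smt (verit) mult_strict_left_mono)
    with False have "c*w\<^sup>2 < c*(q\<^sup>2 - (w-q)\<^sup>2)" by (simp add: algebra_simps)
    then have "w\<^sup>2 < q\<^sup>2 - (w-q)\<^sup>2" using c by simp
    then have wq: "w*w < w*q" by (simp add: power2_eq_square algebra_simps)
    have lt: "(v-q)\<^sup>2 < (w-q)\<^sup>2 \<and> v \<noteq> 0"
    proof (cases "w > 0")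
      case True
      then have "w < q" using wq by simp
      then have "w < v" "v \<le> q" using w True v by auto
      then have "0 \<le> q - v" "q - v < q - w" by auto
      then have "(q-v)\<^sup>2 < (q-w)\<^sup>2" by (simp add: power_strict_mono)
      then show ?thesis using \<open>w<v\<close> True by (simp add: power2_commute)
    next
      case False
      then have wn: "w < 0" using w by auto
      then have "q < w" using wq by (simp add: mult_less_cancel_left)
      then have "v < w" "q \<le> v" using w wn v by auto
      then have "0 \<le> v - q" "v - q < w - q" by auto
      then have "(v-q)\<^sup>2 < (w-q)\<^sup>2" by (simp add: power_strict_mono)
      then show ?thesis using \<open>v<w\<close> wn by simp
    qed
    then show ?thesis using c w by simp
  qed
qed



definition Psi :: "real \<Rightarrow> real \<Rightarrow> real \<Rightarrow> ('a \<Rightarrow> real) \<Rightarrow> ('a \<Rightarrow> real) \<Rightarrow> 'a \<Rightarrow> real \<Rightarrow> real" where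
  "Psi \<alpha> \<beta> L g uk x t = g x * (t - uk x) + L/2*(t - uk x)\<^sup>2 + \<alpha>/2*t\<^sup>2 + \<beta>*(if t\<noteq>0 then 1 else 0)"

lemma model_eq:
  assumes fin: "\<Omega> \<in> lmeasurable" and u: "L2 \<Omega> u" and uk: "L2 \<Omega> uk" and g: "L2 \<Omega> (gradf uk)"
  shows "integrable (lebesgue_on \<Omega>) (\<lambda>x. Psi \<alpha> \<beta> L (gradf uk) uk x (u x))"
    and "IHT_model \<Omega> \<alpha> \<beta> f gradf L uk u = f uk + (\<integral>x. Psi \<alpha> \<beta> L (gradf uk) uk x (u x) \<partial>lebesgue_on \<Omega>)"
proof -
  let ?M = "lebesgue_on \<Omega>"
  interpret finite_measure ?M using fin by (rule finite_measure_lebesgue_on)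
  define g where "g = gradf uk"
  have d: "L2 \<Omega> (\<lambda>x. u x - uk x)" using L2_diff[OF u uk] .
  have i1: "integrable ?M (\<lambda>x. g x * (u x - uk x))"
    using L2_mult_integrable[OF g d] unfolding g_def .
  have i2: "integrable ?M (\<lambda>x. (u x - uk x)\<^sup>2)" using d unfolding L2_def by auto
  have i3: "integrable ?M (\<lambda>x. (u x)\<^sup>2)" using u unfolding L2_def by auto
  have um[measurable]: "u \<in> borel_measurable ?M" using u unfolding L2_def by auto
  have m4: "(\<lambda>x. if u x \<noteq> 0 then 1 else 0::real) \<in> borel_measurable ?M" by measurable
  have i4: "integrable ?M (\<lambda>x. if u x \<noteq> 0 then 1 else 0::real)"
    by (rule integrable_const_bound[where B=1]) (auto simp: m4)
  have P: "(\<lambda>x. Psi \<alpha> \<beta> L g uk x (u x)) = (\<lambda>x. g x * (u x - uk x) + L/2*(u x - uk x)\<^sup>2 + \<alpha>/2*(u x)\<^sup>2 + \<beta>*(if u x\<noteq>0 then 1 else 0))"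
    unfolding Psi_def by simp
  show "integrable ?M (\<lambda>x. Psi \<alpha> \<beta> L (gradf uk) uk x (u x))"
    unfolding g_def[symmetric] P using i1 i2 i3 i4 by auto
  have I: "(\<integral>x. Psi \<alpha> \<beta> L g uk x (u x) \<partial>?M) = (\<integral>x. g x * (u x - uk x) \<partial>?M) + L/2*(\<integral>x. (u x - uk x)\<^sup>2 \<partial>?M)
     + \<alpha>/2*(\<integral>x. (u x)\<^sup>2 \<partial>?M) + \<beta>*(\<integral>x. (if u x\<noteq>0 then 1 else 0) \<partial>?M)"
    unfolding P using i1 i2 i3 i4 by simp
  have n1: "(L2norm \<Omega> (\<lambda>x. u x - uk x))\<^sup>2 = (\<integral>x. (u x - uk x)\<^sup>2 \<partial>?M)"
    unfolding L2norm_def by (simp add: integral_nonneg_AE)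
  have n2: "(L2norm \<Omega> u)\<^sup>2 = (\<integral>x. (u x)\<^sup>2 \<partial>?M)"
    unfolding L2norm_def by (simp add: integral_nonneg_AE)
  have n3: "L0 \<Omega> u = (\<integral>x. (if u x\<noteq>0 then 1 else 0) \<partial>?M)"
  proof -
    have "(\<integral>x. (if u x\<noteq>0 then 1 else 0) \<partial>?M) = (\<integral>x. indicator {x\<in>\<Omega>. u x \<noteq> 0} x \<partial>?M)"
      by (rule Bochner_Integration.integral_cong) (auto simp: indicator_def)
    also have "\<dots> = measure ?M {x\<in>\<Omega>. u x \<noteq> 0}" by (simp add: Int_absorb2 subset_iff)
    finally show ?thesis unfolding L0_def by simp
  qed
  show "IHT_model \<Omega> \<alpha> \<beta> f gradf L uk u = f uk + (\<integral>x. Psi \<alpha> \<beta> L (gradf uk) uk x (u x) \<partial>lebesgue_on \<Omega>)"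
    unfolding g_def[symmetric] I IHT_model_def gfun_def n1 n2 n3 L2inner_def by simp
qed



lemma Psi_diff:
  assumes "L + \<alpha> > 0"
  shows "Psi \<alpha> \<beta> L g uk x t1 - Psi \<alpha> \<beta> L g uk x t2 =
    (L+\<alpha>)/2 * ((t1 - (L*uk x - g x)/(L+\<alpha>))\<^sup>2 - (t2 - (L*uk x - g x)/(L+\<alpha>))\<^sup>2)
    + \<beta>*(if t1\<noteq>0 then 1 else 0) - \<beta>*(if t2\<noteq>0 then 1 else 0)"
proof -
  define Q where "Q = (L*uk x - g x)/(L+\<alpha>)"
  have KQ: "(L+\<alpha>)*Q = L*uk x - g x" using assms unfolding Q_def by simp
  have "(L+\<alpha>)/2 * ((t1 - Q)\<^sup>2 - (t2 - Q)\<^sup>2) = (L+\<alpha>)/2*(t1\<^sup>2-t2\<^sup>2) - ((L+\<alpha>)*Q)*(t1-t2)"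
    by (simp add: power2_eq_square field_simps)
  also have "\<dots> = (L+\<alpha>)/2*(t1\<^sup>2-t2\<^sup>2) - (L*uk x - g x)*(t1-t2)" by (simp only: KQ)
  finally have "(L+\<alpha>)/2 * ((t1 - Q)\<^sup>2 - (t2 - Q)\<^sup>2) = (L+\<alpha>)/2*(t1\<^sup>2-t2\<^sup>2) - (L*uk x - g x)*(t1-t2)" .
  then show ?thesis unfolding Q_def[symmetric] Psi_def by (simp add: power2_eq_square field_simps)
qed

lemma key:
  fixes \<Omega> :: "'a::euclidean_space set"
  assumes fin: "\<Omega> \<in> lmeasurable" and uk: "L2 \<Omega> uk" and g: "L2 \<Omega> (gradf uk)"
    and w: "w \<in> Uad \<Omega> b"
    and mn: "\<forall>v\<in>Uad \<Omega> b. IHT_model \<Omega> \<alpha> \<beta> f gradf L uk w \<le> IHT_model \<Omega> \<alpha> \<beta> f gradf L uk v"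
    and a: "\<alpha> \<ge> 0" and be: "\<beta> > 0" and L: "L > 0" and s: "0 < s" "s\<^sup>2 \<le> 2*\<beta>/(L+\<alpha>)" "ereal s \<le> b"
  shows "AE x in lebesgue_on \<Omega>. w x \<noteq> 0 \<longrightarrow> s \<le> \<bar>w x\<bar>"
proof -
  let ?M = "lebesgue_on \<Omega>"
  interpret finite_measure ?M using fin by (rule finite_measure_lebesgue_on)
  define c where "c = (L+\<alpha>)/2"
  have c: "c > 0" using a L unfolding c_def by simp
  have sc: "s\<^sup>2 \<le> \<beta>/c" using s(2) unfolding c_def by (metis divide_divide_eq_right mult.commute)
  define q where "q x = (L*uk x - gradf uk x)/(L+\<alpha>)" for x
  define V where "V x = (if c*(q x)\<^sup>2 < c*(w x-q x)\<^sup>2+\<beta> then 0 else max (-s) (min s (q x)))" for x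
  define v where "v x = (if 0<\<bar>w x\<bar> \<and> \<bar>w x\<bar> < s then V x else w x)" for x
  have wL: "L2 \<Omega> w" and wb: "AE x in ?M. ereal \<bar>w x\<bar> \<le> b" using w unfolding Uad_def by auto
  have [measurable]: "w \<in> borel_measurable ?M" "uk \<in> borel_measurable ?M" "gradf uk \<in> borel_measurable ?M"
    using wL uk g unfolding L2_def by auto
  have vm[measurable]: "v \<in> borel_measurable ?M" unfolding v_def V_def q_def by measurable
  have vs: "\<bar>V x\<bar> \<le> s" for x unfolding V_def using s by auto
  have vbound: "(v x)\<^sup>2 \<le> (w x)\<^sup>2 + s\<^sup>2" for x
  proof (cases "0<\<bar>w x\<bar> \<and> \<bar>w x\<bar> < s")
    case True
    then have "\<bar>v x\<bar> \<le> \<bar>s\<bar>" unfolding v_def using vs[of x] s(1) by simp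
    then have "(v x)\<^sup>2 \<le> s\<^sup>2" by (simp only: abs_le_square_iff)
    moreover have "0 \<le> (w x)\<^sup>2" by simp
    ultimately show ?thesis by linarith
  qed (auto simp: v_def)
  have vL: "L2 \<Omega> v" unfolding L2_def
  proof
    show "v \<in> borel_measurable ?M" by (rule vm)
    have i: "integrable ?M (\<lambda>x. (w x)\<^sup>2 + s\<^sup>2)" using wL unfolding L2_def by auto
    show "integrable ?M (\<lambda>x. (v x)\<^sup>2)"
      by (rule Bochner_Integration.integrable_bound[OF i]) (auto intro!: AE_I2 simp: vbound)
  qed
  have "AE x in ?M. ereal \<bar>v x\<bar> \<le> b"
    using wb
  proof (rule eventually_mono)
    fix x assume "ereal \<bar>w x\<bar> \<le> b"
    moreover have "ereal \<bar>V x\<bar> \<le> b"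
    proof -
      have "ereal \<bar>V x\<bar> \<le> ereal s" using vs[of x] by simp
      then show ?thesis using s(3) by (rule order_trans)
    qed
    ultimately show "ereal \<bar>v x\<bar> \<le> b" unfolding v_def by simp
  qed
  with vL have vU: "v \<in> Uad \<Omega> b" unfolding Uad_def by auto
  let ?P = "\<lambda>u x. Psi \<alpha> \<beta> L (gradf uk) uk x (u x)"
  have iw: "integrable ?M (?P w)"
    by (rule model_eq(1)[where gradf=gradf and \<alpha>=\<alpha> and \<beta>=\<beta> and L=L, OF fin wL uk g])
  have ew: "IHT_model \<Omega> \<alpha> \<beta> f gradf L uk w = f uk + (\<integral>x. ?P w x \<partial>?M)"
    by (rule model_eq(2)[where gradf=gradf and \<alpha>=\<alpha> and \<beta>=\<beta> and L=L and f=f, OF fin wL uk g])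
  have iv: "integrable ?M (?P v)"
    by (rule model_eq(1)[where gradf=gradf and \<alpha>=\<alpha> and \<beta>=\<beta> and L=L, OF fin vL uk g])
  have ev: "IHT_model \<Omega> \<alpha> \<beta> f gradf L uk v = f uk + (\<integral>x. ?P v x \<partial>?M)"
    by (rule model_eq(2)[where gradf=gradf and \<alpha>=\<alpha> and \<beta>=\<beta> and L=L and f=f, OF fin vL uk g])
  have le: "(\<integral>x. ?P w x \<partial>?M) \<le> (\<integral>x. ?P v x \<partial>?M)" using mn vU ew ev by force
  have Lpa: "L + \<alpha> > 0" using a L by simp
  have pw: "?P v x \<le> ?P w x \<and> (0<\<bar>w x\<bar> \<and> \<bar>w x\<bar> < s \<longrightarrow> ?P v x < ?P w x)" for x
  proof (cases "0<\<bar>w x\<bar> \<and> \<bar>w x\<bar> < s")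
    case True
    have "c*(V x-q x)\<^sup>2 + \<beta>*(if V x\<noteq>0 then 1 else 0) < c*(w x-q x)\<^sup>2 + \<beta>*(if w x \<noteq> 0 then 1 else 0)"
      using pointwise(1)[OF c be s(1) sc, of "w x" "q x"] True unfolding V_def by auto
    moreover have "?P v x - ?P w x = c*((V x-q x)\<^sup>2 - (w x-q x)\<^sup>2) + \<beta>*(if V x\<noteq>0 then 1 else 0) - \<beta>*(if w x \<noteq> 0 then 1 else 0)"
    proof -
      have vx: "v x = V x" using True unfolding v_def by simp
      show ?thesis unfolding vx c_def q_def by (rule Psi_diff[OF Lpa])
    qed
    moreover have "c*((V x-q x)\<^sup>2 - (w x-q x)\<^sup>2) = c*(V x-q x)\<^sup>2 - c*(w x-q x)\<^sup>2"
      by (simp add: right_diff_distrib)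
    ultimately have "?P v x < ?P w x" by linarith
    then show ?thesis using True by simp
  next
    case False
    then have "v x = w x" unfolding v_def by auto
    then show ?thesis using False by simp
  qed
  define D where "D x = ?P w x - ?P v x" for x
  have iD: "integrable ?M D" unfolding D_def using iw iv by auto
  have "(\<integral>x. D x \<partial>?M) = (\<integral>x. ?P w x \<partial>?M) - (\<integral>x. ?P v x \<partial>?M)"
    unfolding D_def using iw iv by simp
  moreover have "(\<integral>x. D x \<partial>?M) \<ge> 0" unfolding D_def using pw by (intro integral_nonneg_AE) auto
  ultimately have "(\<integral>x. D x \<partial>?M) = 0" using le by simp
  then have "AE x in ?M. D x = 0"
    using integral_nonneg_eq_0_iff_AE[OF iD] pw unfolding D_def by auto
  then show ?thesis
  proof (rule eventually_mono)
    fix x assume "D x = 0"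
    then have "\<not> (0<\<bar>w x\<bar> \<and> \<bar>w x\<bar> < s)" using pw[of x] unfolding D_def by auto
    then show "w x \<noteq> 0 \<longrightarrow> s \<le> \<bar>w x\<bar>" by auto
  qed
qed



theorem mainTheorem7:
  fixes \<Omega> :: "'a::euclidean_space set"
    and b :: ereal and \<alpha> \<beta> L Lf p :: real
    and f :: "('a \<Rightarrow> real) \<Rightarrow> real" and gradf :: "('a \<Rightarrow> real) \<Rightarrow> ('a \<Rightarrow> real)"
    and u :: "nat \<Rightarrow> 'a \<Rightarrow> real" and k :: nat
  assumes "open \<Omega>" and "bounded \<Omega>"
    and "\<alpha> \<ge> 0" and "\<beta> > 0" and "b > 0"
    and "standing_f \<Omega> f gradf Lf"
    and "L > 0"
    and "IHT_seq \<Omega> b \<alpha> \<beta> f gradf L u"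
    and "k \<ge> 1" and "p \<ge> 1"
  shows "(\<integral>\<^sup>+ x. ennreal (\<bar>u (Suc k) x - u k x\<bar> powr p) \<partial>lebesgue_on \<Omega>)
         \<ge> ennreal ((real_of_ereal (min b (ereal (sqrt (2 * \<beta> / (L + \<alpha>)))))) powr p)
           * (\<integral>\<^sup>+ x. ennreal \<bar>supp_chi (u k) x - supp_chi (u (Suc k)) x\<bar> \<partial>lebesgue_on \<Omega>)"
proof -
  let ?M = "lebesgue_on \<Omega>"
  define r where "r = sqrt (2 * \<beta> / (L + \<alpha>))"
  define s where "s = real_of_ereal (min b (ereal r))"
  have fin: "\<Omega> \<in> lmeasurable" using assms(1,2) by (simp add: lmeasurable_open)
  have r: "r > 0" using assms(3,4,7) unfolding r_def by simp
  have es: "ereal s = min b (ereal r)" and s0: "0 < s" and sr: "s \<le> r"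
  proof -
    have "ereal s = min b (ereal r) \<and> 0 < s \<and> s \<le> r"
      using assms(5) r unfolding s_def by (cases b rule: ereal_cases) (auto simp: min_def)
    then show "ereal s = min b (ereal r)" "0 < s" "s \<le> r" by auto
  qed
  have sb: "ereal s \<le> b" using es by simp
  have s2: "s\<^sup>2 \<le> 2*\<beta>/(L+\<alpha>)"
  proof -
    have "s\<^sup>2 \<le> r\<^sup>2" using s0 sr by (simp add: power_mono)
    also have "r\<^sup>2 = 2*\<beta>/(L+\<alpha>)" unfolding r_def using assms(3,4,7) by simp
    finally show ?thesis .
  qed
  have seq: "u 0 \<in> Uad \<Omega> b" "\<And>i. u (Suc i) \<in> Uad \<Omega> b"
    "\<And>i. \<forall>v\<in>Uad \<Omega> b. IHT_model \<Omega> \<alpha> \<beta> f gradf L (u i) (u (Suc i)) \<le> IHT_model \<Omega> \<alpha> \<beta> f gradf L (u i) v"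
    using assms(8) unfolding IHT_seq_def by auto
  have U: "u i \<in> Uad \<Omega> b" for i using seq by (cases i) auto
  have UL: "L2 \<Omega> (u i)" for i using U[of i] unfolding Uad_def by auto
  have gL: "L2 \<Omega> (gradf (u i))" for i using assms(6) UL[of i] unfolding standing_f_def by auto
  have K: "AE x in ?M. u (Suc i) x \<noteq> 0 \<longrightarrow> s \<le> \<bar>u (Suc i) x\<bar>" for i
    by (rule key[OF fin UL gL seq(2) seq(3) assms(3,4,7) s0 s2 sb])
  have Kk: "AE x in ?M. u k x \<noteq> 0 \<longrightarrow> s \<le> \<bar>u k x\<bar>"
    using K[of "k - 1"] assms(9) by simp
  have Kk1: "AE x in ?M. u (Suc k) x \<noteq> 0 \<longrightarrow> s \<le> \<bar>u (Suc k) x\<bar>" by (rule K)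
  have [measurable]: "u i \<in> borel_measurable ?M" for i using UL[of i] unfolding L2_def by auto
  have chim: "(\<lambda>x. ennreal \<bar>supp_chi (u k) x - supp_chi (u (Suc k)) x\<bar>) \<in> borel_measurable ?M"
    unfolding supp_chi_def by measurable
  have "ennreal (s powr p) * (\<integral>\<^sup>+ x. ennreal \<bar>supp_chi (u k) x - supp_chi (u (Suc k)) x\<bar> \<partial>?M)
     = (\<integral>\<^sup>+ x. ennreal (s powr p) * ennreal \<bar>supp_chi (u k) x - supp_chi (u (Suc k)) x\<bar> \<partial>?M)"
    by (rule nn_integral_cmult[OF chim, symmetric])
  also have "\<dots> \<le> (\<integral>\<^sup>+ x. ennreal (\<bar>u (Suc k) x - u k x\<bar> powr p) \<partial>?M)"
  proof (rule nn_integral_mono_AE)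
    show "AE x in ?M. ennreal (s powr p) * ennreal \<bar>supp_chi (u k) x - supp_chi (u (Suc k)) x\<bar>
            \<le> ennreal (\<bar>u (Suc k) x - u k x\<bar> powr p)"
      using Kk Kk1
    proof eventually_elim
      case (elim x)
      have "s powr p * \<bar>supp_chi (u k) x - supp_chi (u (Suc k)) x\<bar> \<le> \<bar>u (Suc k) x - u k x\<bar> powr p"
      proof (cases "(u k x = 0) = (u (Suc k) x = 0)")
        case True
        then show ?thesis unfolding supp_chi_def by (auto simp: indicator_def)
      next
        case False
        then have "s \<le> \<bar>u (Suc k) x - u k x\<bar>" using elim by auto
        then have "s powr p \<le> \<bar>u (Suc k) x - u k x\<bar> powr p"
          using s0 assms(10) by (intro powr_mono2) auto
        moreover have "\<bar>supp_chi (u k) x - supp_chi (u (Suc k)) x\<bar> = 1"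
          using False unfolding supp_chi_def by (auto simp: indicator_def)
        ultimately show ?thesis by simp
      qed
      then show ?case by (simp add: ennreal_mult[symmetric] ennreal_leI)
    qed
  qed
  finally show ?thesis unfolding s_def r_def by simp
qed


end
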